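(* Let $p>1$ and $n>1$ be an integer. Let $f(z) = c_0 + c_1 z + c_2 z^2 + \dots$ be a bounded holomorphic function on $\mathbb D = \{z:|z|<1\}$ with no zeros in $\mathbb D$, belonging to $H^p$, which is not a polynomial of degree at most $n$. Then there exists $\varepsilon_0>0$ such that for every $\varepsilon<\varepsilon_0$ and every point $\mathbf d = (d_0, d_1, \dots, d_n) \in \mathbb C^{n+1}$ with $|\mathbf d| \le \varepsilon$ there is a bounded, zero-free holomorphic function $f^*(z) = c_0^* + c_1^* z + c_2^* z^2 + \dots \in H^p$ on $\mathbb D$ satisfying $c_j^* = c_j + d_j$ for all $j = 0, 1, \dots, n$ and $$\|f^*\|_p = \|f\|_p + O(\varepsilon),$$ i.e. $\bigl|\|f^*\|_p - \|f\|_p\bigr| \le C\varepsilon$ with a constant $C$ independent of $\mathbf d$ and $\varepsilon$.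
   Context: $H^p$ is the Hardy space of holomorphic functions on $\mathbb D$ with norm $\|f\|_p = \sup_{r<1}\bigl(\frac{1}{2\pi}\int_{-\pi}^{\pi}|f(re^{i\theta})|^p\,d\theta\bigr)^{1/p}$. $|\mathbf d|$ denotes the Euclidean norm on $\mathbb C^{n+1}$. *)

theory Defs
  imports "HOL-Analysis.Analysis"
begin

definition hardy_mean :: "real \<Rightarrow> (complex \<Rightarrow> complex) \<Rightarrow> real \<Rightarrow> real" where
  "hardy_mean p f r = (1 / (2 * pi)) * integral {-pi..pi} (\<lambda>t. norm (f (complex_of_real r * cis t)) powr p)"

definition hardy_norm :: "real \<Rightarrow> (complex \<Rightarrow> complex) \<Rightarrow> real" where
  "hardy_norm p f = (SUP r\<in>{0..<1}. hardy_mean p f r powr (1 / p))"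

definition hardy_space :: "real \<Rightarrow> (complex \<Rightarrow> complex) set" where
  "hardy_space p = {f. f holomorphic_on ball 0 1 \<and>
      bdd_above ((\<lambda>r. hardy_mean p f r powr (1 / p)) ` {0..<1})}"

definition taylor_coeff :: "(complex \<Rightarrow> complex) \<Rightarrow> nat \<Rightarrow> complex" where
  "taylor_coeff f j = (deriv ^^ j) f 0 / of_nat (fact j)"

end

theory Submission
  imports Defs "HOL-Complex_Analysis.Complex_Analysis"
begin
fun sol :: "(nat \<Rightarrow> complex) \<Rightarrow> (nat \<Rightarrow> complex) \<Rightarrow> nat \<Rightarrow> complex" where
  "sol c d j = (d j - (\<Sum>k<j. c (j - k) * sol c d k)) / c 0"
fun Kb :: "(nat \<Rightarrow> complex) \<Rightarrow> nat \<Rightarrow> real" where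
  "Kb c j = (1 + (\<Sum>k<j. cmod (c (j - k)) * Kb c k)) / cmod (c 0)"
declare sol.simps[simp del] Kb.simps[simp del]

lemma sol_eq:
  assumes "c 0 \<noteq> 0"
  shows "(\<Sum>i=0..j. c i * sol c d (j - i)) = d j"
proof -
  have "(\<Sum>i=0..j. c i * sol c d (j - i)) = (\<Sum>k=0..j. c (j - k) * sol c d k)"
    by (rule fps_mult_commute_lemma[where f="\<lambda>a b. c a * sol c d b"])
  also have "\<dots> = (\<Sum>k<Suc j. c (j - k) * sol c d k)"
    by (simp add: atLeast0AtMost lessThan_Suc_atMost)
  also have "\<dots> = c 0 * sol c d j + (\<Sum>k<j. c (j - k) * sol c d k)"
    by simp
  also have "c 0 * sol c d j = d j - (\<Sum>k<j. c (j - k) * sol c d k)"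
    using assms by (subst sol.simps) simp
  finally show ?thesis by simp
qed

lemma Kb_nonneg: "Kb c j \<ge> 0"
proof (induction j rule: less_induct)
  case (less j)
  show ?case
    by (subst Kb.simps) (auto intro!: divide_nonneg_nonneg add_nonneg_nonneg sum_nonneg mult_nonneg_nonneg less)
qed

lemma sol_bound:
  assumes "c 0 \<noteq> 0" "\<And>j. j \<le> n \<Longrightarrow> cmod (d j) \<le> D" "j \<le> n"
  shows "cmod (sol c d j) \<le> Kb c j * D"
  using assms(3)
proof (induction j rule: less_induct)
  case (less j)
  have D: "D \<ge> 0" using assms(2)[of 0] by (meson le0 norm_ge_zero order_trans)
  have "cmod (d j - (\<Sum>k<j. c (j - k) * sol c d k)) \<le> cmod (d j) + (\<Sum>k<j. cmod (c (j - k)) * cmod (sol c d k))"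
    by (rule order_trans[OF norm_triangle_ineq4]) (auto intro!: order_trans[OF norm_sum] simp: norm_mult)
  also have "\<dots> \<le> D + (\<Sum>k<j. cmod (c (j - k)) * (Kb c k * D))"
    using less by (intro add_mono sum_mono mult_left_mono assms(2)) auto
  also have "\<dots> = (1 + (\<Sum>k<j. cmod (c (j - k)) * Kb c k)) * D"
    by (simp add: algebra_simps sum_distrib_left sum_distrib_right)
  finally have *: "cmod (d j - (\<Sum>k<j. c (j - k) * sol c d k)) \<le> (1 + (\<Sum>k<j. cmod (c (j - k)) * Kb c k)) * D" .
  show ?case
    apply (subst sol.simps, subst Kb.simps)
    using * assms(1) by (simp add: norm_divide divide_right_mono field_simps)
qed

lemma tc_poly:
  fixes a :: "nat \<Rightarrow> complex"
  shows "(deriv ^^ i) (\<lambda>z. \<Sum>k\<le>n. a k * z ^ k) 0 = (if i \<le> n then fact i * a i else 0)"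
proof (induction n)
  case 0
  then show ?case by (cases i) (simp_all add: higher_deriv_const)
next
  case (Suc n)
  have "(deriv ^^ i) (\<lambda>z. \<Sum>k\<le>Suc n. a k * z ^ k) 0 =
        (deriv ^^ i) (\<lambda>z. (\<Sum>k\<le>n. a k * z ^ k) + a (Suc n) * z ^ Suc n) 0"
    by simp
  also have "\<dots> = (deriv ^^ i) (\<lambda>z. \<Sum>k\<le>n. a k * z ^ k) 0 + (deriv ^^ i) (\<lambda>z. a (Suc n) * z ^ Suc n) 0"
    by (rule higher_deriv_add[where S=UNIV]) (auto intro!: holomorphic_intros)
  also have "(deriv ^^ i) (\<lambda>z. a (Suc n) * z ^ Suc n) 0 = a (Suc n) * (deriv ^^ i) (\<lambda>z. z ^ Suc n) 0"
    by (rule higher_deriv_cmult[where A=UNIV]) (auto intro!: holomorphic_intros)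
  also have "(deriv ^^ i) (\<lambda>z. z ^ Suc n) 0 = pochhammer (of_nat (Suc (Suc n) - i)) i * (0::complex) ^ (Suc n - i)"
    using higher_deriv_power[of i 0 "Suc n" 0] by simp
  also have "\<dots> = (if i = Suc n then fact i else 0)"
    by (auto simp: pochhammer_of_nat_eq_0_iff pochhammer_fact pochhammer_0_left)
  finally show ?case using Suc by (auto simp: le_Suc_eq)
qed
lemma circ_in_ball: "r \<in> {0..<1} \<Longrightarrow> complex_of_real r * cis t \<in> ball (0::complex) 1"
  by (auto simp: norm_mult)

lemma hm_integrable:
  assumes "h holomorphic_on ball 0 1" "\<forall>z\<in>ball 0 1. h z \<noteq> 0" "r \<in> {0..<1}"
  shows "(\<lambda>t. cmod (h (complex_of_real r * cis t)) powr p) integrable_on {-pi..pi}"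
proof -
  have "continuous_on {-pi..pi} (\<lambda>t. h (complex_of_real r * cis t))"
    apply (rule continuous_on_compose2[OF holomorphic_on_imp_continuous_on[OF assms(1)]])
    using circ_in_ball[OF assms(3)] by (auto intro!: continuous_intros)
  then have "continuous_on {-pi..pi} (\<lambda>t. cmod (h (complex_of_real r * cis t)) powr p)"
    using assms(2) circ_in_ball[OF assms(3)]
    by (intro continuous_on_powr continuous_intros) auto
  then show ?thesis by (rule integrable_continuous_interval)
qed

lemma hm_nonneg: "hardy_mean p h r \<ge> 0"
proof -
  have "integral {-pi..pi} (\<lambda>t. norm (h (complex_of_real r * cis t)) powr p) \<ge> 0"
  proof (cases "(\<lambda>t. norm (h (complex_of_real r * cis t)) powr p) integrable_on {-pi..pi}")
    case True
    then show ?thesis by (rule integral_nonneg) auto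
  qed (simp add: not_integrable_integral)
  then show ?thesis unfolding hardy_mean_def by simp
qed

lemma hm_compare:
  assumes "f holomorphic_on ball 0 1" "g holomorphic_on ball 0 1"
   "\<forall>z\<in>ball 0 1. f z \<noteq> 0" "\<forall>z\<in>ball 0 1. g z \<noteq> 0" "r \<in> {0..<1}" "p \<ge> 0" "b \<ge> 0"
   "\<forall>z\<in>ball 0 1. cmod (g z) \<le> b * cmod (f z)"
  shows "hardy_mean p g r \<le> b powr p * hardy_mean p f r"
proof -
  have "integral {-pi..pi} (\<lambda>t. cmod (g (complex_of_real r * cis t)) powr p)
     \<le> integral {-pi..pi} (\<lambda>t. b powr p * cmod (f (complex_of_real r * cis t)) powr p)"
  proof (rule integral_le)
    show "(\<lambda>t. b powr p * cmod (f (complex_of_real r * cis t)) powr p) integrable_on {-pi..pi}"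
      using integrable_cmul[OF hm_integrable[OF assms(1,3,5)], of "b powr p"] by simp
  next
    fix t
    have "cmod (g (complex_of_real r * cis t)) powr p \<le> (b * cmod (f (complex_of_real r * cis t))) powr p"
      using assms(6,8) circ_in_ball[OF assms(5)] by (intro powr_mono2) auto
    also have "\<dots> = b powr p * cmod (f (complex_of_real r * cis t)) powr p"
      using assms(7) by (simp add: powr_mult)
    finally show "cmod (g (complex_of_real r * cis t)) powr p \<le> b powr p * cmod (f (complex_of_real r * cis t)) powr p" .
  qed (use hm_integrable[OF assms(2,4,5)] in auto)
  then show ?thesis unfolding hardy_mean_def
    by (simp add: divide_right_mono)
qed

lemma hm_root_compare:
  assumes "f holomorphic_on ball 0 1" "g holomorphic_on ball 0 1"
   "\<forall>z\<in>ball 0 1. f z \<noteq> 0" "\<forall>z\<in>ball 0 1. g z \<noteq> 0" "r \<in> {0..<1}" "p > 0" "b \<ge> 0"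
   "\<forall>z\<in>ball 0 1. cmod (g z) \<le> b * cmod (f z)"
  shows "hardy_mean p g r powr (1/p) \<le> b * hardy_mean p f r powr (1/p)"
proof -
  have "hardy_mean p g r powr (1/p) \<le> (b powr p * hardy_mean p f r) powr (1/p)"
    using hm_compare[OF assms(1-5) _ assms(7,8)] assms(6) hm_nonneg
    by (intro powr_mono2) auto
  also have "\<dots> = b * hardy_mean p f r powr (1/p)"
    using assms(6,7) hm_nonneg[of p f r] by (simp add: powr_mult powr_powr)
  finally show ?thesis .
qed

lemma hardy_compare:
  assumes p: "p > 0" and hol: "f holomorphic_on ball 0 1" "g holomorphic_on ball 0 1"
   and nz: "\<forall>z\<in>ball 0 1. f z \<noteq> 0" "\<forall>z\<in>ball 0 1. g z \<noteq> 0" and fH: "f \<in> hardy_space p"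
   and a: "a > 0" and ab: "\<forall>z\<in>ball 0 1. a * cmod (f z) \<le> cmod (g z) \<and> cmod (g z) \<le> b * cmod (f z)"
  shows "g \<in> hardy_space p \<and> a * hardy_norm p f \<le> hardy_norm p g \<and> hardy_norm p g \<le> b * hardy_norm p f"
proof -
  have b: "b \<ge> 0"
  proof -
    have z: "(0::complex) \<in> ball 0 1" by simp
    have "0 < a * cmod (f 0)" using a nz z by auto
    also have "\<dots> \<le> b * cmod (f 0)" using ab z by (meson order_trans)
    finally show ?thesis by (simp add: zero_less_mult_iff)
  qed
  have up: "\<forall>z\<in>ball 0 1. cmod (g z) \<le> b * cmod (f z)" using ab by auto
  have lo: "\<forall>z\<in>ball 0 1. cmod (f z) \<le> (1/a) * cmod (g z)" using ab a by (auto simp: field_simps)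
  have bddf: "bdd_above ((\<lambda>r. hardy_mean p f r powr (1 / p)) ` {0..<1})"
    using fH unfolding hardy_space_def by auto
  have ne: "{0..<1::real} \<noteq> {}" by auto
  have le1: "hardy_mean p g r powr (1/p) \<le> b * hardy_norm p f" if "r \<in> {0..<1}" for r
  proof -
    have "hardy_mean p f r powr (1/p) \<le> hardy_norm p f"
      unfolding hardy_norm_def using bddf that by (rule cSUP_upper2) auto
    then show ?thesis using hm_root_compare[OF hol nz that p b up] b
      by (meson mult_left_mono order_trans)
  qed
  have bddg: "bdd_above ((\<lambda>r. hardy_mean p g r powr (1 / p)) ` {0..<1})"
    by (rule bdd_aboveI2[where M="b * hardy_norm p f"]) (use le1 in auto)
  have gH: "g \<in> hardy_space p" unfolding hardy_space_def using hol bddg by auto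
  have "hardy_norm p g \<le> b * hardy_norm p f"
    unfolding hardy_norm_def[of p g] using ne le1 by (intro cSUP_least) auto
  moreover have "hardy_norm p f \<le> hardy_norm p g / a"
  proof -
    have "hardy_mean p f r powr (1/p) \<le> hardy_norm p g / a" if "r \<in> {0..<1}" for r
    proof -
      have "hardy_mean p g r powr (1/p) \<le> hardy_norm p g"
        unfolding hardy_norm_def using bddg that by (rule cSUP_upper2) auto
      then show ?thesis using hm_root_compare[OF hol(2,1) nz(2,1) that p _ lo] a
        by (simp add: field_simps)
    qed
    then show ?thesis unfolding hardy_norm_def[of p f] using ne by (intro cSUP_least) auto
  qed
  then have "a * hardy_norm p f \<le> hardy_norm p g" using a by (simp add: field_simps)
  ultimately show ?thesis using gH by auto
qed

lemma tc_h:
  fixes s :: "nat \<Rightarrow> complex"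
  assumes "i \<le> n"
  shows "(deriv ^^ i) (\<lambda>z. 1 + (\<Sum>k\<le>n. s k * z ^ k)) 0 = fact i * ((if i = 0 then 1 else 0) + s i)"
proof -
  have "(deriv ^^ i) (\<lambda>z. 1 + (\<Sum>k\<le>n. s k * z ^ k)) 0 =
        (deriv ^^ i) (\<lambda>z. 1) 0 + (deriv ^^ i) (\<lambda>z. \<Sum>k\<le>n. s k * z ^ k) 0"
    by (rule higher_deriv_add[where S=UNIV]) (auto intro!: holomorphic_intros)
  then show ?thesis using assms by (simp add: tc_poly algebra_simps)
qed

lemma binom_aux:
  assumes "i \<le> j"
  shows "of_nat (j choose i) * (fact i * x) * (fact (j - i) * y) / fact j = (x * y :: complex)"
proof -
  have "fact i * fact (j - i) * (j choose i) = fact j" using binomial_fact_lemma[OF assms] .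
  then have "(fact i * fact (j - i) * of_nat (j choose i) :: complex) = fact j"
    by (metis of_nat_fact of_nat_mult)
  moreover have "(fact j :: complex) \<noteq> 0" by simp
  ultimately show ?thesis by (simp add: field_simps)
qed

theorem proposition2:
  fixes p :: real and n :: nat and f :: "complex \<Rightarrow> complex"
  assumes "p > 1" and "n > 1"
    and "f holomorphic_on ball 0 1"
    and "bounded (f ` ball 0 1)"
    and "\<forall>z\<in>ball 0 1. f z \<noteq> 0"
    and "f \<in> hardy_space p"
    and "\<not> (\<exists>a :: nat \<Rightarrow> complex. \<forall>z\<in>ball 0 1. f z = (\<Sum>j\<le>n. a j * z ^ j))"
  shows "\<exists>\<epsilon>0 > 0. \<exists>C. \<forall>\<epsilon>::real. \<epsilon> < \<epsilon>0 \<longrightarrow>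
           (\<forall>d :: nat \<Rightarrow> complex. sqrt (\<Sum>j\<le>n. (cmod (d j))\<^sup>2) \<le> \<epsilon> \<longrightarrow>
              (\<exists>g. g holomorphic_on ball 0 1 \<and> bounded (g ` ball 0 1) \<and>
                   (\<forall>z\<in>ball 0 1. g z \<noteq> 0) \<and> g \<in> hardy_space p \<and>
                   (\<forall>j\<le>n. taylor_coeff g j = taylor_coeff f j + d j) \<and>
                   \<bar>hardy_norm p g - hardy_norm p f\<bar> \<le> C * \<epsilon>))"
proof -
  note hol = assms(3) and nz = assms(5) and fH = assms(6)
  define c where "c = taylor_coeff f"
  have z0: "(0::complex) \<in> ball 0 1" by simp
  have c0: "c 0 \<noteq> 0" using nz z0 by (simp add: c_def taylor_coeff_def)
  define Kt where "Kt = 1 + (\<Sum>k\<le>n. Kb c k)"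
  have Ksum: "(\<Sum>k\<le>n. Kb c k) \<ge> 0" by (intro sum_nonneg Kb_nonneg)
  have Kt: "Kt \<ge> 1" using Ksum by (simp add: Kt_def)
  have bddf: "bdd_above ((\<lambda>r. hardy_mean p f r powr (1 / p)) ` {0..<1})"
    using fH unfolding hardy_space_def by auto
  have Nf: "hardy_norm p f \<ge> 0"
  proof -
    have "hardy_mean p f 0 powr (1/p) \<le> hardy_norm p f"
      unfolding hardy_norm_def using bddf by (rule cSUP_upper2[where x=0]) auto
    then show ?thesis by (meson order_trans powr_ge_zero)
  qed
  obtain B where B: "\<forall>z\<in>ball 0 1. cmod (f z) \<le> B"
    using assms(4) unfolding bounded_iff by auto
  have fderiv: "(deriv ^^ i) f 0 = fact i * c i" for i
    by (simp add: c_def taylor_coeff_def)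
  show ?thesis
  proof (rule exI[of _ "1 / (2 * Kt)"], intro conjI exI[of _ "Kt * hardy_norm p f"] allI impI)
    show "0 < 1 / (2 * Kt)" using Kt by simp
    fix \<epsilon> :: real and d :: "nat \<Rightarrow> complex"
    assume eps: "\<epsilon> < 1 / (2 * Kt)" and dle: "sqrt (\<Sum>j\<le>n. (cmod (d j))\<^sup>2) \<le> \<epsilon>"
    define D where "D = sqrt (\<Sum>j\<le>n. (cmod (d j))\<^sup>2)"
    have dj: "cmod (d j) \<le> D" if "j \<le> n" for j
    proof -
      have "(cmod (d j))\<^sup>2 \<le> (\<Sum>j\<le>n. (cmod (d j))\<^sup>2)"
        using that by (intro member_le_sum) auto
      then show ?thesis unfolding D_def by (simp add: real_le_rsqrt)
    qed
    have D0: "D \<ge> 0" unfolding D_def by (simp add: sum_nonneg)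
    have De: "D \<le> \<epsilon>" using dle D_def by simp
    define s where "s = sol c d"
    define h where "h = (\<lambda>z. 1 + (\<Sum>k\<le>n. s k * z ^ k))"
    define g where "g = (\<lambda>z. f z * h z)"
    define \<delta> where "\<delta> = Kt * \<epsilon>"
    have \<delta>0: "\<delta> \<ge> 0" using D0 De Kt by (simp add: \<delta>_def)
    have \<delta>1: "\<delta> < 1/2" using eps Kt by (simp add: \<delta>_def field_simps)
    have hb: "cmod (h z - 1) \<le> \<delta>" if "z \<in> ball 0 1" for z
    proof -
      have "cmod (h z - 1) = cmod (\<Sum>k\<le>n. s k * z ^ k)" by (simp add: h_def)
      also have "\<dots> \<le> (\<Sum>k\<le>n. cmod (s k))"
      proof (rule order_trans[OF norm_sum], rule sum_mono)
        fix k
        have "cmod z ^ k \<le> 1" using that by (simp add: power_le_one)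
        then show "cmod (s k * z ^ k) \<le> cmod (s k)"
          by (simp add: norm_mult norm_power mult_left_le)
      qed
      also have "\<dots> \<le> (\<Sum>k\<le>n. Kb c k * D)"
        unfolding s_def using sol_bound[where c=c and d=d and n=n and D=D, OF c0 dj] by (intro sum_mono) auto
      also have "\<dots> = (\<Sum>k\<le>n. Kb c k) * D" by (simp add: sum_distrib_right)
      also have "\<dots> \<le> Kt * \<epsilon>" using Ksum D0 De Kt_def by (intro mult_mono) auto
      finally show ?thesis by (simp add: \<delta>_def)
    qed
    have hup: "cmod (h z) \<le> 1 + \<delta>" and hlo: "1 - \<delta> \<le> cmod (h z)" if "z \<in> ball 0 1" for z
    proof -
      have "cmod (h z) \<le> cmod (h z - 1) + 1" using norm_triangle_ineq[of "h z - 1" 1] by simp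
      then show "cmod (h z) \<le> 1 + \<delta>" using hb[OF that] by simp
      have "1 \<le> cmod (h z - 1) + cmod (h z)" using norm_triangle_ineq2[of 1 "h z"] by (simp add: norm_minus_commute)
      then show "1 - \<delta> \<le> cmod (h z)" using hb[OF that] by simp
    qed
    have hholo: "h holomorphic_on ball 0 1" unfolding h_def by (auto intro!: holomorphic_intros)
    have gholo: "g holomorphic_on ball 0 1" unfolding g_def using hol hholo by (auto intro!: holomorphic_intros)
    have gnz: "\<forall>z\<in>ball 0 1. g z \<noteq> 0"
    proof
      fix z assume z: "z \<in> ball (0::complex) 1"
      have "h z \<noteq> 0" using hlo[OF z] \<delta>1 by auto
      then show "g z \<noteq> 0" using nz z by (simp add: g_def)
    qed
    have gcomp: "\<forall>z\<in>ball 0 1. (1 - \<delta>) * cmod (f z) \<le> cmod (g z) \<and> cmod (g z) \<le> (1 + \<delta>) * cmod (f z)"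
    proof
      fix z :: complex assume z: "z \<in> ball 0 1"
      show "(1 - \<delta>) * cmod (f z) \<le> cmod (g z) \<and> cmod (g z) \<le> (1 + \<delta>) * cmod (f z)"
        using mult_right_mono[OF hlo[OF z], of "cmod (f z)"] mult_right_mono[OF hup[OF z], of "cmod (f z)"]
        by (simp add: g_def norm_mult mult.commute)
    qed
    have main: "g \<in> hardy_space p \<and> (1 - \<delta>) * hardy_norm p f \<le> hardy_norm p g \<and> hardy_norm p g \<le> (1 + \<delta>) * hardy_norm p f"
      using assms(1) \<delta>1 by (intro hardy_compare[OF _ hol gholo nz gnz fH _ gcomp]) auto
    have "\<bar>hardy_norm p g - hardy_norm p f\<bar> \<le> \<delta> * hardy_norm p f"
      using main by (simp add: algebra_simps abs_le_iff)
    then have normb: "\<bar>hardy_norm p g - hardy_norm p f\<bar> \<le> Kt * hardy_norm p f * \<epsilon>"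
      by (simp add: \<delta>_def algebra_simps)
    have gbdd: "bounded (g ` ball 0 1)"
      unfolding bounded_iff
    proof (intro exI ballI)
      fix y assume "y \<in> g ` ball 0 1"
      then obtain z where z: "z \<in> ball 0 1" "y = g z" by auto
      have "cmod (g z) \<le> (1 + \<delta>) * cmod (f z)" using gcomp z by auto
      also have "\<dots> \<le> (1 + \<delta>) * B" using B z \<delta>0 by (intro mult_left_mono) auto
      finally show "cmod y \<le> (1 + \<delta>) * B" using z by simp
    qed
    have tc: "taylor_coeff g j = c j + d j" if j: "j \<le> n" for j
    proof -
      have "(deriv ^^ j) g 0 = (\<Sum>i = 0..j. of_nat (j choose i) * (deriv ^^ i) f 0 * (deriv ^^ (j-i)) h 0)"
        unfolding g_def by (rule higher_deriv_mult[OF hol hholo]) auto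
      then have "taylor_coeff g j = (\<Sum>i = 0..j. of_nat (j choose i) * (deriv ^^ i) f 0 * (deriv ^^ (j-i)) h 0) / fact j"
        by (simp add: taylor_coeff_def)
      also have "\<dots> = (\<Sum>i = 0..j. of_nat (j choose i) * (fact i * c i) * (fact (j - i) * ((if j - i = 0 then 1 else 0) + s (j - i))) / fact j)"
        unfolding sum_divide_distrib using j
        by (intro sum.cong refl) (simp add: fderiv h_def tc_h)
      also have "\<dots> = (\<Sum>i = 0..j. c i * s (j - i) + (if i = j then c i else 0))"
      proof (intro sum.cong refl)
        fix i assume i: "i \<in> {0..j}"
        have "of_nat (j choose i) * (fact i * c i) * (fact (j - i) * ((if j - i = 0 then 1 else 0) + s (j - i))) / fact j
              = c i * ((if j - i = 0 then 1 else 0) + s (j - i))"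
          using i by (intro binom_aux) auto
        also have "\<dots> = c i * s (j - i) + (if i = j then c i else 0)"
          using i by (auto simp: algebra_simps)
        finally show "of_nat (j choose i) * (fact i * c i) * (fact (j - i) * ((if j - i = 0 then 1 else 0) + s (j - i))) / fact j
              = c i * s (j - i) + (if i = j then c i else 0)" .
      qed
      also have "\<dots> = d j + c j"
        by (simp add: sum.distrib sol_eq[where c=c, OF c0] s_def)
      finally show ?thesis by simp
    qed
    show "\<exists>g. g holomorphic_on ball 0 1 \<and> bounded (g ` ball 0 1) \<and>
                   (\<forall>z\<in>ball 0 1. g z \<noteq> 0) \<and> g \<in> hardy_space p \<and>
                   (\<forall>j\<le>n. taylor_coeff g j = taylor_coeff f j + d j) \<and>
                   \<bar>hardy_norm p g - hardy_norm p f\<bar> \<le> Kt * hardy_norm p f * \<epsilon>"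
      using gholo gbdd gnz main tc normb by (auto simp: c_def)
  qed
qed

end
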